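(* For distinct $a,b\in H^2$ and $k\in\mathbb R$ let $S_k(a,b)=\{x\in H^2: d_H(x,a)^2-d_H(x,b)^2=k\}$. For $\mathsf x=(x_1,x_2)$, $\mathsf y=(y_1,y_2)$ in $H^2\times H^2$ with $x_i\ne y_i$ let $E_k(\mathsf x,\mathsf y)=S_k(x_1,y_1)\times S_k(y_2,x_2)$. Let $\mathsf x,\mathsf y,\mathsf z\in H^2\times H^2$ be such that $\mathsf y$ is between $\mathsf x$ and $\mathsf z$. If $E_k(\mathsf x,\mathsf y)\cap E_l(\mathsf y,\mathsf z)\neq\emptyset$ for some $k,l\in\mathbb R$, then $kl>0$.
   Context: For $x,y,z\in H^2$, let $l_1=S_0(x,y)$ and $l_2=S_0(y,z)$ be the equidistant lines; if $l_1,l_2$ are disjoint, the complement of $l_1\cup l_2$ has three components, two half-planes bounded by $l_1$ resp. $l_2$, and a slab bounded by $l_1\cup l_2$. We say $y$ is between $x$ and $z$ if $l_1$ and $l_2$ are disjoint and $y$ lies in the slab. For points of $H^2\times H^2$, $\mathsf y$ is between $\mathsf x$ and $\mathsf z$ if for each $i=1,2$ the $i$-th coordinate $y_i$ is between $x_i$ and $z_i$ in this sense. $d_H$ is the hyperbolic distance. *)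

theory Defs
  imports "HOL-Analysis.Analysis"
begin

definition H2 :: "complex set" where
  "H2 = {z. Im z > 0}"

definition dH :: "complex \<Rightarrow> complex \<Rightarrow> real" where
  "dH z w = arcosh (1 + (cmod (z - w))\<^sup>2 / (2 * Im z * Im w))"

definition Sk :: "real \<Rightarrow> complex \<Rightarrow> complex \<Rightarrow> complex set" where
  "Sk k a b = {x \<in> H2. (dH x a)\<^sup>2 - (dH x b)\<^sup>2 = k}"

definition Ek :: "real \<Rightarrow> complex \<times> complex \<Rightarrow> complex \<times> complex \<Rightarrow> (complex \<times> complex) set" where
  "Ek k x y = Sk k (fst x) (fst y) \<times> Sk k (snd y) (snd x)"

text \<open>y is between x and z in H^2: the equidistant lines l1 = S_0(x,y), l2 = S_0(y,z)
  are disjoint and y lies in the slab, i.e. in the component of H^2 - (l1 \<union> l2)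
  whose boundary (within H^2) meets both l1 and l2.\<close>
definition between_H :: "complex \<Rightarrow> complex \<Rightarrow> complex \<Rightarrow> bool" where
  "between_H x y z \<longleftrightarrow>
     (let l1 = Sk 0 x y; l2 = Sk 0 y z;
          C = connected_component_set (H2 - (l1 \<union> l2)) y
      in l1 \<inter> l2 = {} \<and> y \<in> H2 - (l1 \<union> l2) \<and>
         closure C \<inter> l1 \<noteq> {} \<and> closure C \<inter> l2 \<noteq> {})"

definition between_HH :: "complex \<times> complex \<Rightarrow> complex \<times> complex \<Rightarrow> complex \<times> complex \<Rightarrow> bool" where
  "between_HH x y z \<longleftrightarrow>
     between_H (fst x) (fst y) (fst z) \<and> between_H (snd x) (snd y) (snd z)"

end

theory Submission
  imports Defs
begin

definition sig :: "complex \<Rightarrow> complex \<Rightarrow> complex \<Rightarrow> real" where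
  "sig a b p = (cmod (p - a))\<^sup>2 / Im a - (cmod (p - b))\<^sup>2 / Im b"

lemma dH_le_iff:
  assumes "p \<in> H2" "a \<in> H2" "b \<in> H2"
  shows "dH p a \<le> dH p b \<longleftrightarrow> sig a b p \<le> 0"
proof -
  have ip: "Im p > 0" and ia: "Im a > 0" and ib: "Im b > 0" using assms by (auto simp: H2_def)
  define A where "A = (cmod (p - a))\<^sup>2 / Im a"
  define B where "B = (cmod (p - b))\<^sup>2 / Im b"
  have eA: "(cmod (p - a))\<^sup>2 / (2 * Im p * Im a) = A / (2 * Im p)" using ip ia by (simp add: A_def field_simps)
  have eB: "(cmod (p - b))\<^sup>2 / (2 * Im p * Im b) = B / (2 * Im p)" using ip ib by (simp add: B_def field_simps)
  have A0: "A \<ge> 0" "B \<ge> 0" using ia ib by (auto simp: A_def B_def)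
  have g1: "1 + A / (2 * Im p) \<ge> 1" "1 + B / (2 * Im p) \<ge> 1" using A0 ip by auto
  have "dH p a \<le> dH p b \<longleftrightarrow> \<not> (arcosh (1 + B / (2 * Im p)) < arcosh (1 + A / (2 * Im p)))"
    unfolding dH_def eA eB by linarith
  also have "\<dots> \<longleftrightarrow> \<not> (1 + B / (2 * Im p) < 1 + A / (2 * Im p))"
    using g1 by simp
  also have "\<dots> \<longleftrightarrow> A \<le> B" using ip by (simp add: divide_less_cancel not_less)
  finally show ?thesis by (simp add: sig_def A_def B_def)
qed

lemma dH_nonneg: "p \<in> H2 \<Longrightarrow> a \<in> H2 \<Longrightarrow> dH p a \<ge> 0"
  unfolding dH_def H2_def by (intro arcosh_nonneg_real) auto

lemma sq_le_iff: "p \<in> H2 \<Longrightarrow> a \<in> H2 \<Longrightarrow> b \<in> H2 \<Longrightarrow>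
   (dH p a)\<^sup>2 - (dH p b)\<^sup>2 \<le> 0 \<longleftrightarrow> sig a b p \<le> 0"
proof -
  assume h: "p \<in> H2" "a \<in> H2" "b \<in> H2"
  have "(dH p a)\<^sup>2 - (dH p b)\<^sup>2 \<le> 0 \<longleftrightarrow> dH p a \<le> dH p b"
    using dH_nonneg[OF h(1,2)] dH_nonneg[OF h(1,3)]
    using power2_le_iff_abs_le[of "dH p b" "dH p a"] by auto
  then show ?thesis using dH_le_iff[OF h] by simp
qed

lemma sig_swap: "sig b a p = - sig a b p" by (simp add: sig_def)

lemma sq_ge_iff: "p \<in> H2 \<Longrightarrow> a \<in> H2 \<Longrightarrow> b \<in> H2 \<Longrightarrow>
   (dH p a)\<^sup>2 - (dH p b)\<^sup>2 \<ge> 0 \<longleftrightarrow> sig a b p \<ge> 0"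
proof -
  assume h: "p \<in> H2" "a \<in> H2" "b \<in> H2"
  show ?thesis using sq_le_iff[OF h(1,3,2)] sig_swap[of b a p] by linarith
qed

lemma sq_eq_iff: "p \<in> H2 \<Longrightarrow> a \<in> H2 \<Longrightarrow> b \<in> H2 \<Longrightarrow>
   (dH p a)\<^sup>2 - (dH p b)\<^sup>2 = 0 \<longleftrightarrow> sig a b p = 0"
  using sq_le_iff[of p a b] sq_ge_iff[of p a b] by linarith

lemma Sk0_eq: "a \<in> H2 \<Longrightarrow> b \<in> H2 \<Longrightarrow> Sk 0 a b = {p \<in> H2. sig a b p = 0}"
  unfolding Sk_def using sq_eq_iff by auto

lemma sig_lin:
  assumes "Im a \<noteq> 0" "Im b \<noteq> 0"
  shows "sig a b p = (1/Im a - 1/Im b) * ((Re p)\<^sup>2 + (Im p)\<^sup>2)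
     + (2*Re b/Im b - 2*Re a/Im a) * Re p
     + (((Re a)\<^sup>2 + (Im a)\<^sup>2)/Im a - ((Re b)\<^sup>2 + (Im b)\<^sup>2)/Im b)"
  using assms unfolding sig_def cmod_power2
  by (simp add: field_simps power2_eq_square)

lemma sig_cont: "continuous_on UNIV (sig a b)"
  unfolding sig_def divide_inverse by (intro continuous_intros)

lemma comb_lin:
  fixes wa wb wc A B C X1 X2 X3 Y1 Y2 Y3 :: real
  assumes "wa + wb + wc = 1"
  shows "A*(wa*X1+wb*X2+wc*X3) + B*(wa*Y1+wb*Y2+wc*Y3) + C
     = wa*(A*X1+B*Y1+C) + wb*(A*X2+B*Y2+C) + wc*(A*X3+B*Y3+C)"
proof -
  have "C = (wa+wb+wc)*C" using assms by simp
  then show ?thesis by (simp add: algebra_simps)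
qed

lemma comb_var:
  fixes wa wb wc R1 R2 R3 :: real
  assumes "wa + wb + wc = 1"
  shows "(wa*R1^2+wb*R2^2+wc*R3^2) - (wa*R1+wb*R2+wc*R3)^2
     = wa*(R1-(wa*R1+wb*R2+wc*R3))^2 + wb*(R2-(wa*R1+wb*R2+wc*R3))^2 + wc*(R3-(wa*R1+wb*R2+wc*R3))^2"
proof -
  define V where "V = wa*R1+wb*R2+wc*R3"
  have "wa*(R1-V)^2 + wb*(R2-V)^2 + wc*(R3-V)^2
      = (wa*R1^2+wb*R2^2+wc*R3^2) - 2*V*(wa*R1+wb*R2+wc*R3) + (wa+wb+wc)*V^2"
    by (simp add: power2_eq_square algebra_simps)
  also have "\<dots> = (wa*R1^2+wb*R2^2+wc*R3^2) - V^2"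
    using assms unfolding V_def[symmetric] by (simp add: power2_eq_square)
  finally show ?thesis unfolding V_def by simp
qed

lemma convex_point:
  assumes H: "q1 \<in> H2" "q2 \<in> H2" "p \<in> H2" "x \<in> H2" "y \<in> H2" "z \<in> H2"
    and s1: "sig x y q1 = 0" "sig y z q1 < 0"
    and s2: "sig y z q2 = 0" "sig x y q2 > 0"
    and sp: "sig x y p \<le> 0" "sig y z p \<ge> 0"
  shows "\<exists>r\<in>H2. sig x y r = 0 \<and> sig y z r = 0"
proof -
  have im: "Im x \<noteq> 0" "Im y \<noteq> 0" "Im z \<noteq> 0" using H by (auto simp: H2_def)
  have imq: "Im q1 > 0" "Im q2 > 0" "Im p > 0" using H by (auto simp: H2_def)
  define s where "s = - sig y z q1"
  define t where "t = sig x y q2"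
  define c1 where "c1 = sig x y p"
  define c2 where "c2 = sig y z p"
  have st: "s > 0" "t > 0" "c1 \<le> 0" "c2 \<ge> 0" using s1 s2 sp by (auto simp: s_def t_def c1_def c2_def)
  define D where "D = c2/s - c1/t + 1"
  have D: "D > 0" using st unfolding D_def by (smt (verit) divide_nonneg_pos divide_nonpos_pos)
  define wa where "wa = (c2/s)/D"
  define wb where "wb = (-c1/t)/D"
  define wc where "wc = 1/D"
  have w: "wa \<ge> 0" "wb \<ge> 0" "wc > 0" using st D by (auto simp: wa_def wb_def wc_def divide_nonpos_pos)
  have "wa + wb + wc = (c2/s - c1/t + 1)/D" unfolding wa_def wb_def wc_def by (simp add: add_divide_distrib diff_divide_distrib)
  then have wsum: "wa + wb + wc = 1" using D unfolding D_def by simp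
  have e1: "wa*0 + wb*t + wc*c1 = 0" using st D by (simp add: wa_def wb_def wc_def field_simps)
  have e2: "wa*(-s) + wb*0 + wc*c2 = 0" using st D by (simp add: wa_def wb_def wc_def field_simps)
  define V where "V = wa*Re q1 + wb*Re q2 + wc*Re p"
  define U where "U = wa*((Re q1)\<^sup>2+(Im q1)\<^sup>2) + wb*((Re q2)\<^sup>2+(Im q2)\<^sup>2) + wc*((Re p)\<^sup>2+(Im p)\<^sup>2)"
  have "U - V^2 = ((wa*(Re q1)^2+wb*(Re q2)^2+wc*(Re p)^2) - V^2) + (wa*(Im q1)\<^sup>2 + wb*(Im q2)\<^sup>2 + wc*(Im p)\<^sup>2)"
    unfolding U_def by (simp add: algebra_simps)
  also have "(wa*(Re q1)^2+wb*(Re q2)^2+wc*(Re p)^2) - V^2 \<ge> 0"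
    unfolding V_def comb_var[OF wsum] using w by (intro add_nonneg_nonneg mult_nonneg_nonneg) auto
  moreover have "wa*(Im q1)\<^sup>2 + wb*(Im q2)\<^sup>2 + wc*(Im p)\<^sup>2 > 0"
    using w imq by (intro add_nonneg_pos mult_pos_pos add_nonneg_nonneg mult_nonneg_nonneg) auto
  ultimately have UV: "U - V^2 > 0" by linarith
  define r where "r = Complex V (sqrt (U - V^2))"
  have rH: "r \<in> H2" using UV by (simp add: r_def H2_def)
  have rr: "(Re r)\<^sup>2 + (Im r)\<^sup>2 = U" "Re r = V" using UV by (simp_all add: r_def)
  have "sig x y r = wa * sig x y q1 + wb * sig x y q2 + wc * sig x y p"
    unfolding sig_lin[OF im(1,2), of r] sig_lin[OF im(1,2), of q1] sig_lin[OF im(1,2), of q2]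
      sig_lin[OF im(1,2), of p] rr(1) unfolding rr(2) U_def V_def by (rule comb_lin[OF wsum])
  then have r1: "sig x y r = 0" using e1 s1 by (simp add: t_def c1_def)
  have "sig y z r = wa * sig y z q1 + wb * sig y z q2 + wc * sig y z p"
    unfolding sig_lin[OF im(2,3), of r] sig_lin[OF im(2,3), of q1] sig_lin[OF im(2,3), of q2]
      sig_lin[OF im(2,3), of p] rr(1) unfolding rr(2) U_def V_def by (rule comb_lin[OF wsum])
  then have r2: "sig y z r = 0" using e2 s2 by (simp add: s_def c2_def)
  show ?thesis using rH r1 r2 by blast
qed

lemma conn_sign:
  fixes f :: "complex \<Rightarrow> real"
  assumes "connected C" "continuous_on UNIV f" "y \<in> C" "f y > 0" "\<And>q. q \<in> C \<Longrightarrow> f q \<noteq> 0"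
  shows "\<forall>q\<in>closure C. f q \<ge> 0"
proof -
  have conn: "connected (f ` C)"
    using assms(1,2) by (meson connected_continuous_image continuous_on_subset subset_UNIV)
  have pos: "\<forall>q\<in>C. f q > 0"
  proof (rule ccontr)
    assume "\<not> (\<forall>q\<in>C. f q > 0)"
    then obtain q where q: "q \<in> C" "f q \<le> 0" by force
    have "0 \<in> f ` C"
      by (rule connectedD_interval[OF conn, of "f q" "f y"]) (use q assms(3,4) in auto)
    then show False using assms(5) by force
  qed
  have "closure C \<subseteq> {q. f q \<ge> 0}"
    by (rule closure_minimal) (use pos in \<open>auto intro: closed_Collect_le assms(2) continuous_on_const\<close>)
  then show ?thesis by auto
qed

lemma key:
  assumes H: "x \<in> H2" "y \<in> H2" "z \<in> H2" "p \<in> H2"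
    and b: "between_H x y z"
    and sp: "sig x y p \<le> 0" "sig y z p \<ge> 0"
  shows False
proof -
  define l1 where "l1 = Sk 0 x y"
  define l2 where "l2 = Sk 0 y z"
  define C where "C = connected_component_set (H2 - (l1 \<union> l2)) y"
  have bb: "l1 \<inter> l2 = {}" "y \<in> H2 - (l1 \<union> l2)" "closure C \<inter> l1 \<noteq> {}" "closure C \<inter> l2 \<noteq> {}"
    using b unfolding between_H_def Let_def l1_def l2_def C_def by auto
  have L1: "l1 = {q \<in> H2. sig x y q = 0}" using Sk0_eq H unfolding l1_def by auto
  have L2: "l2 = {q \<in> H2. sig y z q = 0}" using Sk0_eq H unfolding l2_def by auto
  have Csub: "C \<subseteq> H2 - (l1 \<union> l2)" unfolding C_def by (rule connected_component_subset)
  have yC: "y \<in> C" unfolding C_def using bb(2) by (simp add: connected_component_refl)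
  have sxy: "sig x y y > 0"
  proof -
    have "sig x y y \<ge> 0" using H by (simp add: sig_def H2_def)
    moreover have "sig x y y \<noteq> 0" using bb(2) L1 H by auto
    ultimately show ?thesis by simp
  qed
  have syz: "sig y z y < 0"
  proof -
    have "sig y z y \<le> 0" using H by (simp add: sig_def H2_def)
    moreover have "sig y z y \<noteq> 0" using bb(2) L2 H by auto
    ultimately show ?thesis by simp
  qed
  have c1: "\<forall>q\<in>closure C. sig x y q \<ge> 0"
    by (rule conn_sign[OF _ sig_cont yC sxy]) (use Csub L1 in \<open>auto simp: C_def\<close>)
  have c2': "\<forall>q\<in>closure C. (\<lambda>q. - sig y z q) q \<ge> 0"
    by (rule conn_sign) (use Csub L2 yC syz in \<open>auto simp: C_def intro: continuous_intros sig_cont\<close>)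
  obtain q1 where q1: "q1 \<in> closure C" "q1 \<in> l1" using bb(3) by auto
  obtain q2 where q2: "q2 \<in> closure C" "q2 \<in> l2" using bb(4) by auto
  have q1H: "q1 \<in> H2" "sig x y q1 = 0" using q1 L1 by auto
  have q2H: "q2 \<in> H2" "sig y z q2 = 0" using q2 L2 by auto
  have "sig y z q1 \<noteq> 0" using q1 q1H L2 bb(1) by auto
  then have a1: "sig y z q1 < 0" using c2' q1 by force
  have "sig x y q2 \<noteq> 0" using q2 q2H L1 bb(1) by auto
  then have a2: "sig x y q2 > 0" using c1 q2 by force
  obtain r where "r \<in> H2" "sig x y r = 0" "sig y z r = 0"
    using convex_point[OF q1H(1) q2H(1) H(4) H(1,2,3) q1H(2) a1 q2H(2) a2 sp] by blast
  then show False using bb(1) L1 L2 by auto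
qed

theorem mainTheorem5:
  fixes x y z :: "complex \<times> complex" and k l :: real
  assumes "fst x \<in> H2" "snd x \<in> H2" "fst y \<in> H2" "snd y \<in> H2"
      "fst z \<in> H2" "snd z \<in> H2"
    and "between_HH x y z"
    and "Ek k x y \<inter> Ek l y z \<noteq> {}"
  shows "k * l > 0"
proof -
  obtain p1 p2 where p: "(p1, p2) \<in> Ek k x y" "(p1, p2) \<in> Ek l y z" using assms(8) by auto
  have P: "p1 \<in> H2" "(dH p1 (fst x))\<^sup>2 - (dH p1 (fst y))\<^sup>2 = k"
     "(dH p1 (fst y))\<^sup>2 - (dH p1 (fst z))\<^sup>2 = l"
     "p2 \<in> H2" "(dH p2 (snd y))\<^sup>2 - (dH p2 (snd x))\<^sup>2 = k"
     "(dH p2 (snd z))\<^sup>2 - (dH p2 (snd y))\<^sup>2 = l"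
    using p unfolding Ek_def Sk_def by auto
  have b1: "between_H (fst x) (fst y) (fst z)" and b2: "between_H (snd x) (snd y) (snd z)"
    using assms(7) unfolding between_HH_def by auto
  have n1: "\<not> (k \<le> 0 \<and> l \<ge> 0)"
  proof
    assume h: "k \<le> 0 \<and> l \<ge> 0"
    show False
      by (rule key[OF assms(1,3,5) P(1) b1])
         (use h P sq_le_iff[of p1 "fst x" "fst y"] sq_ge_iff[of p1 "fst y" "fst z"] assms in auto)
  qed
  have n2: "\<not> (k \<ge> 0 \<and> l \<le> 0)"
  proof
    assume h: "k \<ge> 0 \<and> l \<le> 0"
    have "(dH p2 (snd x))\<^sup>2 - (dH p2 (snd y))\<^sup>2 \<le> 0" "(dH p2 (snd y))\<^sup>2 - (dH p2 (snd z))\<^sup>2 \<ge> 0"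
      using h P(5,6) by linarith+
    then show False
      by (intro key[OF assms(2,4,6) P(4) b2])
         (use P sq_le_iff[of p2 "snd x" "snd y"] sq_ge_iff[of p2 "snd y" "snd z"] assms in auto)
  qed
  show ?thesis
  proof (cases "k > 0")
    case True then have "l > 0" using n2 by linarith
    then show ?thesis using True by simp
  next
    case False then have "k < 0" "l < 0" using n1 n2 by linarith+
    then show ?thesis by (simp add: mult_neg_neg)
  qed
qed

end
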